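(* Let $p>0$ and let $(u_n)_{n\in\mathbb{Z}}$ be a real sequence such that $s_n:=u_{n+2}-u_n$ satisfies $\sum_{n=-\infty}^{\infty}|s_n-2p|<\infty$, and such that $x_n:=\frac{u_{n+1}-u_{n-1}}{2p}\neq 0$ for all $n\in\mathbb{Z}$. Define sequences $(\omega_j(n))_{n\in\mathbb{Z}}$, $j=1,2,\dots$, by $$\omega_1(n)=1-\frac{1}{x_n\,x_{n-1}},\qquad \omega_2(n)=\Bigl(1-\frac{1}{x_{n-1}\,x_{n-2}}\Bigr)\frac{1}{x_n\,x_{n-1}},$$ $$\omega_{j+1}(n)=\omega_j(n-1)-\sum_{k=1}^{j}\omega_k(n-1)\,\omega_{j+1-k}(n),\qquad j=2,3,\dots.$$ Then for every $j\ge 1$, $\omega_j(n)\to 0$ as $|n|\to\infty$.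
   Context: These $\omega_j$ are the coefficients of the series solution $\omega=x_n\bigl(1+\sum_{j\ge1}\omega_j\lambda^j\bigr)$, $|\lambda|<1$, of the discrete Riccati equation $\omega_n(\omega_{n+1}-x_{n+1})-\lambda x_{n+1}\omega_n+\lambda=0$ associated with the lattice potential KdV equation. *)

theory Defs
  imports "HOL-Analysis.Analysis"
begin

text \<open>The coefficients omega_j(n) for j >= 1, given the sequence x :: int => real.
  The value at j = 0 is irrelevant and set to 0.\<close>

function omega :: "(int \<Rightarrow> real) \<Rightarrow> nat \<Rightarrow> int \<Rightarrow> real" where
  "omega x 0 n = 0"
| "omega x (Suc 0) n = 1 - 1 / (x n * x (n - 1))"
| "omega x (Suc (Suc 0)) n = (1 - 1 / (x (n - 1) * x (n - 2))) * (1 / (x n * x (n - 1)))"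
| "omega x (Suc (Suc (Suc j))) n =
     omega x (Suc (Suc j)) (n - 1)
     - (\<Sum>k\<in>{1..Suc (Suc j)}. omega x k (n - 1) * omega x (Suc (Suc (Suc j)) - k) n)"
  by pat_completeness auto
termination
  by (relation "Wellfounded.measure (\<lambda>(x, j, n). j)") auto

end

theory Submission
  imports Defs
begin

lemma shift_lim:
  fixes F :: "int filter" and c :: int
  assumes "F = at_top \<or> F = at_bot"
  shows "filterlim (\<lambda>n. n - c) F F"
  using assms
proof
  assume F: "F = at_top"
  show ?thesis unfolding F filterlim_at_top
  proof (intro allI)
    fix Z :: int show "eventually (\<lambda>x. Z \<le> x - c) at_top"
      using eventually_ge_at_top[of "Z + c"] by (rule eventually_mono) simp
  qed
next
  assume F: "F = at_bot"
  show ?thesis unfolding F filterlim_at_bot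
  proof (intro allI)
    fix Z :: int show "eventually (\<lambda>x. x - c \<le> Z) at_bot"
      using eventually_le_at_bot[of "Z + c"] by (rule eventually_mono) simp
  qed
qed

lemma comp_shift:
  fixes F :: "int filter"
  assumes "F = at_top \<or> F = at_bot" "(f \<longlongrightarrow> a) F"
  shows "((\<lambda>n. f (n - c)) \<longlongrightarrow> a) F"
  using filterlim_compose[OF assms(2) shift_lim[OF assms(1)]] .

lemma omega_lim:
  fixes F :: "int filter"
  assumes F: "F = at_top \<or> F = at_bot" and x: "(x \<longlongrightarrow> 1) F"
  shows "j \<ge> 1 \<Longrightarrow> ((\<lambda>n. omega x j n) \<longlongrightarrow> 0) F"
proof (induction j rule: less_induct)
  case (less j)
  have x1: "((\<lambda>n. x (n - c)) \<longlongrightarrow> 1) F" for c using comp_shift[OF F x] .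
  consider "j = 1" | "j = 2" | i where "j = Suc (Suc (Suc i))"
    using less.prems by (cases j; cases "j - 1"; cases "j - 2") (auto simp: numeral_2_eq_2)
  then show ?case
  proof cases
    case 1
    have "((\<lambda>n. 1 - 1 / (x n * x (n - 1))) \<longlongrightarrow> 1 - 1 / (1 * 1)) F"
      by (intro tendsto_intros x x1) auto
    then show ?thesis using 1 by simp
  next
    case 2
    have "((\<lambda>n. (1 - 1 / (x (n - 1) * x (n - 2))) * (1 / (x n * x (n - 1)))) \<longlongrightarrow> (1 - 1 / (1 * 1)) * (1 / (1*1))) F"
      by (intro tendsto_intros x x1) auto
    then show ?thesis using 2 by (simp add: numeral_2_eq_2)
  next
    case 3
    have IH: "((\<lambda>n. omega x k (n - c)) \<longlongrightarrow> 0) F" if "1 \<le> k" "k < j" for k c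
      using comp_shift[OF F less.IH[OF that(2,1)]] .
    have IH0: "((\<lambda>n. omega x k n) \<longlongrightarrow> 0) F" if "1 \<le> k" "k < j" for k
      using less.IH[OF that(2,1)] .
    have s: "((\<lambda>n. \<Sum>k\<in>{1..Suc (Suc i)}. omega x k (n - 1) * omega x (Suc (Suc (Suc i)) - k) n)
       \<longlongrightarrow> (\<Sum>k\<in>{1..Suc (Suc i)}. 0 * 0)) F"
      by (intro tendsto_sum tendsto_mult IH IH0) (auto simp: 3)
    have d: "((\<lambda>n. omega x (Suc (Suc i)) (n - 1)) \<longlongrightarrow> 0) F"
      by (intro IH) (auto simp: 3)
    from tendsto_diff[OF d s] show ?thesis using 3 by simp
  qed
qed

lemma nat_at_bot: "filterlim (\<lambda>n::int. nat (- n)) sequentially at_bot"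
  unfolding filterlim_at_top eventually_at_bot_linorder
proof (intro allI)
  fix Z show "\<exists>N. \<forall>n\<le>N. Z \<le> nat (- n)" by (rule exI[of _ "- int Z"]) auto
qed

theorem proposition1:
  fixes p :: real and u :: "int \<Rightarrow> real"
  assumes p_pos: "p > 0"
    and summ: "(\<lambda>n. \<bar>(u (n + 2) - u n) - 2 * p\<bar>) summable_on (UNIV :: int set)"
    and x_nz: "\<And>n. (u (n + 1) - u (n - 1)) / (2 * p) \<noteq> 0"
  shows "\<forall>j \<ge> 1.
           ((\<lambda>n. omega (\<lambda>m. (u (m + 1) - u (m - 1)) / (2 * p)) j n) \<longlongrightarrow> 0) at_top \<and>
           ((\<lambda>n. omega (\<lambda>m. (u (m + 1) - u (m - 1)) / (2 * p)) j n) \<longlongrightarrow> 0) at_bot"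
proof -
  define g where "g = (\<lambda>n. \<bar>(u (n + 2) - u n) - 2 * p\<bar>)"
  define s where "s = (\<lambda>n. u (n + 2) - u n)"
  have sg: "g summable_on UNIV" using summ g_def by simp
  have "g summable_on (range int)" by (rule summable_on_subset_banach[OF sg]) auto
  hence "(g \<circ> int) summable_on UNIV" by (subst (asm) summable_on_reindex) auto
  hence "summable (g \<circ> int)" by (rule summable_on_imp_summable)
  hence L1: "(\<lambda>n. g (int n)) \<longlonglongrightarrow> 0" using summable_LIMSEQ_zero[of "g \<circ> int"] by (simp add: o_def)
  have "g summable_on (range (\<lambda>n. - int n))" by (rule summable_on_subset_banach[OF sg]) auto
  hence "(g \<circ> (\<lambda>n. - int n)) summable_on UNIV" by (subst (asm) summable_on_reindex) (auto simp: inj_on_def)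
  hence "summable (g \<circ> (\<lambda>n. - int n))" by (rule summable_on_imp_summable)
  hence L2: "(\<lambda>n. g (- int n)) \<longlonglongrightarrow> 0" using summable_LIMSEQ_zero[of "g \<circ> (\<lambda>n. - int n)"] by (simp add: o_def)
  have T: "(g \<longlongrightarrow> 0) at_top"
  proof -
    have "((\<lambda>n. g (int (nat n))) \<longlongrightarrow> 0) at_top"
      using filterlim_compose[OF L1 filterlim_nat_sequentially] .
    moreover have "eventually (\<lambda>n. g (int (nat n)) = g n) at_top"
      using eventually_ge_at_top[of "0::int"] by (rule eventually_mono) simp
    ultimately show ?thesis by (rule Lim_transform_eventually)
  qed
  have B: "(g \<longlongrightarrow> 0) at_bot"
  proof -
    have "((\<lambda>n. g (- int (nat (- n)))) \<longlongrightarrow> 0) at_bot"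
      using filterlim_compose[OF L2 nat_at_bot] .
    moreover have "eventually (\<lambda>n. g (- int (nat (- n))) = g n) at_bot"
      using eventually_le_at_bot[of "0::int"] by (rule eventually_mono) simp
    ultimately show ?thesis by (rule Lim_transform_eventually)
  qed
  have xlim: "((\<lambda>m. (u (m + 1) - u (m - 1)) / (2 * p)) \<longlongrightarrow> 1) F"
    if F: "F = at_top \<or> F = at_bot" and gF: "(g \<longlongrightarrow> 0) F" for F
  proof -
    have "((\<lambda>n. s n - 2 * p) \<longlongrightarrow> 0) F"
      using gF unfolding g_def s_def by (simp add: tendsto_rabs_zero_iff)
    hence "(s \<longlongrightarrow> 2 * p) F" by (simp add: LIM_zero_iff)
    hence "((\<lambda>n. s (n - 1)) \<longlongrightarrow> 2 * p) F" by (rule comp_shift[OF F])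
    hence "((\<lambda>n. s (n - 1) / (2 * p)) \<longlongrightarrow> 2 * p / (2 * p)) F"
      by (intro tendsto_intros) (use p_pos in auto)
    moreover have "s (n - 1) = u (n + 1) - u (n - 1)" for n
      unfolding s_def by (simp add: algebra_simps)
    ultimately show ?thesis using p_pos by simp
  qed
  show ?thesis
    using omega_lim[OF _ xlim[OF _ T]] omega_lim[OF _ xlim[OF _ B]] by auto
qed

end
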